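(* Let $s\ge1$, $d\ge0$ be integers. For every $n\times m$ $(0,1)$-matrix $M$ with ${\rm br}_s(M)\le d$, $$r(M)\cdot c(M)\le \binom{d}{\le s}2^d.$$
   Context: For a $(0,1)$-matrix $M$ of size $n\times m$, $M[i,j]$ denotes its $(i,j)$ entry and $[n]=\{1,\dots,n\}$. The $s$-binary rank ${\rm br}_s(M)$ is the minimal integer $d\ge 0$ such that there exist $d$ sets (rectangles) $I_k\times J_k$ with $I_k\subseteq[n]$, $J_k\subseteq[m]$, $k\in[d]$, with $M[i,j]=1$ for all $(i,j)\in I_k\times J_k$ and all $k$, and such that every $(i,j)$ with $M[i,j]=1$ lies in at least one and at most $s$ of the rectangles. $r(M)$ and $c(M)$ denote the numbers of distinct rows and distinct columns of $M$. $\binom{d}{\le s}=\sum_{i=0}^{s}\binom{d}{i}$. *)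

theory Defs
  imports Main "HOL-Library.FuncSet"
begin

text \<open>A (0,1)-matrix of size n x m is represented as M :: nat => nat => bool with
  entries M i j for i in {1..n}, j in {1..m} (True = 1); values outside are irrelevant.\<close>

definition is_s_cover ::
  "nat \<Rightarrow> nat \<Rightarrow> nat \<Rightarrow> (nat \<Rightarrow> nat \<Rightarrow> bool) \<Rightarrow> (nat set \<times> nat set) list \<Rightarrow> bool" where
  "is_s_cover s n m M R \<longleftrightarrow>
     (\<forall>k < length R. fst (R ! k) \<subseteq> {1..n} \<and> snd (R ! k) \<subseteq> {1..m}
        \<and> (\<forall>i \<in> fst (R ! k). \<forall>j \<in> snd (R ! k). M i j)) \<and>
     (\<forall>i \<in> {1..n}. \<forall>j \<in> {1..m}. M i j \<longrightarrow>
        (let c = card {k. k < length R \<and> i \<in> fst (R ! k) \<and> j \<in> snd (R ! k)}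
         in 1 \<le> c \<and> c \<le> s))"

definition br :: "nat \<Rightarrow> nat \<Rightarrow> nat \<Rightarrow> (nat \<Rightarrow> nat \<Rightarrow> bool) \<Rightarrow> nat" where
  "br s n m M = (LEAST d. \<exists>R. length R = d \<and> is_s_cover s n m M R)"

definition num_rows :: "nat \<Rightarrow> nat \<Rightarrow> (nat \<Rightarrow> nat \<Rightarrow> bool) \<Rightarrow> nat" where
  "num_rows n m M = card ((\<lambda>i. restrict (M i) {1..m}) ` {1..n})"

definition num_cols :: "nat \<Rightarrow> nat \<Rightarrow> (nat \<Rightarrow> nat \<Rightarrow> bool) \<Rightarrow> nat" where
  "num_cols n m M = card ((\<lambda>j. restrict (\<lambda>i. M i j) {1..n}) ` {1..m})"

definition binom_le :: "nat \<Rightarrow> nat \<Rightarrow> nat" where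
  "binom_le d s = (\<Sum>i\<le>s. d choose i)"

end

theory Submission
  imports Defs
begin

lemma binom_le_Suc:
  "binom_le (Suc d) (Suc s) = binom_le d (Suc s) + binom_le d s"
proof (induction s)
  case 0
  then show ?case by (simp add: binom_le_def)
next
  case (Suc s)
  have "binom_le (Suc d) (Suc (Suc s)) = binom_le (Suc d) (Suc s) + (Suc d choose Suc (Suc s))"
    by (simp add: binom_le_def)
  also have "\<dots> = binom_le d (Suc s) + binom_le d s + (d choose Suc s) + (d choose Suc (Suc s))"
    using Suc by simp
  also have "\<dots> = binom_le d (Suc (Suc s)) + binom_le d (Suc s)"
    by (simp add: binom_le_def)
  finally show ?case .
qed

lemma binom_le_0: "binom_le d 0 = 1"
  by (simp add: binom_le_def)

lemma arith_key:
  fixes x u y v :: nat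
  assumes "u \<le> x" "v \<le> y"
  shows "(x + u) * (y + v) \<le> 2 * (x * y) + 2 * (u * v)"
proof -
  have "int ((x + u) * (y + v)) + (int x - int u) * (int y - int v) = int (2 * (x * y) + 2 * (u * v))"
    by (simp add: algebra_simps)
  moreover have "(int x - int u) * (int y - int v) \<ge> 0" using assms by simp
  ultimately show ?thesis by linarith
qed

lemma sub_aux1: "Z \<subseteq> {..<Suc d} \<Longrightarrow> Z - {d} \<subseteq> {..<d}"
  by (auto simp: less_Suc_eq)

lemma sub_aux2: "Z \<subseteq> {..<Suc d} \<Longrightarrow> d \<notin> Z \<Longrightarrow> Z \<subseteq> {..<d}"
  using sub_aux1[of Z d] by auto

lemma fam:
  fixes A B :: "nat set set"
  assumes "A \<subseteq> Pow {..<d}" "B \<subseteq> Pow {..<d}"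
    and "\<forall>X\<in>A. \<forall>Y\<in>B. card (X \<inter> Y) \<le> s"
  shows "card A * card B \<le> binom_le d s * 2 ^ d"
  using assms
proof (induction d arbitrary: s A B)
  case 0
  then have "A \<subseteq> {{}}" "B \<subseteq> {{}}" by auto
  then have cAB: "card A \<le> 1" "card B \<le> 1"
    using card_mono[of "{{}}" A] card_mono[of "{{}}" B] by simp_all
  then have "card A * card B \<le> 1" using mult_le_mono[OF cAB] by simp
  moreover have "binom_le 0 s \<ge> 1" unfolding binom_le_def by (induction s) auto
  ultimately show ?case by simp
next
  case (Suc d)
  define A0 where "A0 = {X\<in>A. d \<notin> X}"
  define A1 where "A1 = (\<lambda>X. X - {d}) ` {X\<in>A. d \<in> X}"
  define B0 where "B0 = {X\<in>B. d \<notin> X}"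
  define B1 where "B1 = (\<lambda>X. X - {d}) ` {X\<in>B. d \<in> X}"
  have finA: "finite A" using Suc.prems(1) finite_subset by (metis finite_Pow_iff finite_lessThan)
  have finB: "finite B" using Suc.prems(2) finite_subset by (metis finite_Pow_iff finite_lessThan)
  have cA: "card A = card A0 + card A1"
  proof -
    have "A = A0 \<union> {X\<in>A. d \<in> X}" "A0 \<inter> {X\<in>A. d \<in> X} = {}" unfolding A0_def by auto
    then have "card A = card A0 + card {X\<in>A. d \<in> X}"
      using finA by (metis card_Un_disjoint finite_Un)
    moreover have "inj_on (\<lambda>X. X - {d}) {X\<in>A. d \<in> X}"
      by (rule inj_onI) (metis (no_types, lifting) insert_Diff mem_Collect_eq)
    ultimately show ?thesis unfolding A1_def by (simp add: card_image)
  qed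
  have cB: "card B = card B0 + card B1"
  proof -
    have "B = B0 \<union> {X\<in>B. d \<in> X}" "B0 \<inter> {X\<in>B. d \<in> X} = {}" unfolding B0_def by auto
    then have "card B = card B0 + card {X\<in>B. d \<in> X}"
      using finB by (metis card_Un_disjoint finite_Un)
    moreover have "inj_on (\<lambda>X. X - {d}) {X\<in>B. d \<in> X}"
      by (rule inj_onI) (metis (no_types, lifting) insert_Diff mem_Collect_eq)
    ultimately show ?thesis unfolding B1_def by (simp add: card_image)
  qed
  have finA01: "finite A0" "finite A1" unfolding A0_def A1_def using finA by auto
  have finB01: "finite B0" "finite B1" unfolding B0_def B1_def using finB by auto
  have cA2: "card A = card (A0 \<union> A1) + card (A0 \<inter> A1)"
    using cA card_Un_Int[OF finA01] by simp
  have cB2: "card B = card (B0 \<union> B1) + card (B0 \<inter> B1)"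
    using cB card_Un_Int[OF finB01] by simp
  have subA: "A0 \<union> A1 \<subseteq> Pow {..<d}"
  proof
    fix X assume "X \<in> A0 \<union> A1"
    then show "X \<in> Pow {..<d}"
    proof
      assume "X \<in> A0" then show ?thesis using Suc.prems(1) sub_aux2[of X d] unfolding A0_def
        by auto
    next
      assume "X \<in> A1" then show ?thesis using Suc.prems(1) sub_aux1[of _ d] unfolding A1_def
        by blast
    qed
  qed
  have subB: "B0 \<union> B1 \<subseteq> Pow {..<d}"
  proof
    fix X assume "X \<in> B0 \<union> B1"
    then show "X \<in> Pow {..<d}"
    proof
      assume "X \<in> B0" then show ?thesis using Suc.prems(2) sub_aux2[of X d] unfolding B0_def
        by auto
    next
      assume "X \<in> B1" then show ?thesis using Suc.prems(2) sub_aux1[of _ d] unfolding B1_def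
        by blast
    qed
  qed
  have origA: "\<exists>X'\<in>A. X \<subseteq> X'" if "X \<in> A0 \<union> A1" for X
    using that unfolding A0_def A1_def by auto
  have origB: "\<exists>X'\<in>B. X \<subseteq> X'" if "X \<in> B0 \<union> B1" for X
    using that unfolding B0_def B1_def by auto
  have int1: "\<forall>X\<in>A0 \<union> A1. \<forall>Y\<in>B0 \<union> B1. card (X \<inter> Y) \<le> s"
  proof (intro ballI)
    fix X Y assume "X \<in> A0 \<union> A1" "Y \<in> B0 \<union> B1"
    then obtain X' Y' where "X' \<in> A" "Y' \<in> B" "X \<subseteq> X'" "Y \<subseteq> Y'"
      using origA origB by blast
    moreover have "finite (X' \<inter> Y')" using \<open>X' \<in> A\<close> Suc.prems(1)
      by (meson PowD finite_Int finite_lessThan finite_subset subsetD)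
    ultimately have "card (X \<inter> Y) \<le> card (X' \<inter> Y')"
      by (meson Int_mono card_mono)
    then show "card (X \<inter> Y) \<le> s" using Suc.prems(3) \<open>X' \<in> A\<close> \<open>Y' \<in> B\<close> by fastforce
  qed
  have h1: "card (A0 \<union> A1) * card (B0 \<union> B1) \<le> binom_le d s * 2 ^ d"
    using Suc.IH[OF subA subB int1] .
  have memA: "insert d X \<in> A \<and> d \<notin> X" if "X \<in> A0 \<inter> A1" for X
  proof -
    from that obtain Z where "Z \<in> A" "d \<in> Z" "X = Z - {d}" unfolding A1_def by auto
    then have "insert d X = Z" by auto
    then show ?thesis using \<open>Z \<in> A\<close> \<open>X = Z - {d}\<close> by auto
  qed
  have memB: "insert d X \<in> B \<and> d \<notin> X" if "X \<in> B0 \<inter> B1" for X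
  proof -
    from that obtain Z where "Z \<in> B" "d \<in> Z" "X = Z - {d}" unfolding B1_def by auto
    then have "insert d X = Z" by auto
    then show ?thesis using \<open>Z \<in> B\<close> \<open>X = Z - {d}\<close> by auto
  qed
  have int2: "card (X \<inter> Y) + 1 \<le> s" if "X \<in> A0 \<inter> A1" "Y \<in> B0 \<inter> B1" for X Y
  proof -
    have a: "insert d X \<in> A" "d \<notin> X" using memA[OF that(1)] by auto
    have b: "insert d Y \<in> B" "d \<notin> Y" using memB[OF that(2)] by auto
    have "X \<in> Pow {..<d}" using that(1) subA by auto
    then have fin: "finite (X \<inter> Y)" by (meson PowD finite_Int finite_lessThan finite_subset)
    have "insert d X \<inter> insert d Y = insert d (X \<inter> Y)" by auto
    then have "card (insert d X \<inter> insert d Y) = card (X \<inter> Y) + 1"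
      using a(2) fin by simp
    then show ?thesis using Suc.prems(3) a(1) b(1) by metis
  qed
  have h2: "card (A0 \<inter> A1) * card (B0 \<inter> B1) \<le> (if s = 0 then 0 else binom_le d (s - 1) * 2 ^ d)"
  proof (cases s)
    case 0
    then have "A0 \<inter> A1 = {} \<or> B0 \<inter> B1 = {}" using int2 by fastforce
    then show ?thesis using 0 by auto
  next
    case (Suc s')
    have "card (A0 \<inter> A1) * card (B0 \<inter> B1) \<le> binom_le d s' * 2 ^ d"
      apply (rule Suc.IH)
      using subA subB int2 Suc by auto
    then show ?thesis using Suc by simp
  qed
  have le1: "card (A0 \<inter> A1) \<le> card (A0 \<union> A1)"
    by (rule card_mono) (use finA01 in auto)
  have le2: "card (B0 \<inter> B1) \<le> card (B0 \<union> B1)"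
    by (rule card_mono) (use finB01 in auto)
  have "card A * card B \<le> 2 * (card (A0 \<union> A1) * card (B0 \<union> B1)) + 2 * (card (A0 \<inter> A1) * card (B0 \<inter> B1))"
    unfolding cA2 cB2 by (rule arith_key[OF le1 le2])
  also have "\<dots> \<le> 2 * (binom_le d s * 2 ^ d) + 2 * (if s = 0 then 0 else binom_le d (s - 1) * 2 ^ d)"
    using h1 h2 by linarith
  also have "\<dots> = binom_le (Suc d) s * 2 ^ Suc d"
  proof (cases s)
    case 0 then show ?thesis by (simp add: binom_le_0)
  next
    case (Suc s') then show ?thesis by (simp add: binom_le_Suc algebra_simps)
  qed
  finally show ?case .
qed

lemma cover_exists:
  assumes "s \<ge> 1"
  shows "\<exists>R. is_s_cover s n m M R"
proof -
  define L where "L = filter (\<lambda>(i,j). M i j) (List.product [1..<Suc n] [1..<Suc m])"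
  define R where "R = map (\<lambda>p. ({fst p}, {snd p})) L"
  have dL: "distinct L" unfolding L_def by (simp add: distinct_product)
  have setL: "set L = {(i,j). i \<in> {1..n} \<and> j \<in> {1..m} \<and> M i j}"
    unfolding L_def by auto
  have part1: "\<forall>k < length R. fst (R ! k) \<subseteq> {1..n} \<and> snd (R ! k) \<subseteq> {1..m}
        \<and> (\<forall>i \<in> fst (R ! k). \<forall>j \<in> snd (R ! k). M i j)"
  proof (intro allI impI)
    fix k assume "k < length R"
    then have "L ! k \<in> set L" by (simp add: R_def)
    then show "fst (R ! k) \<subseteq> {1..n} \<and> snd (R ! k) \<subseteq> {1..m}
        \<and> (\<forall>i \<in> fst (R ! k). \<forall>j \<in> snd (R ! k). M i j)"
      using \<open>k < length R\<close> unfolding setL R_def by auto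
  qed
  have part2: "\<forall>i \<in> {1..n}. \<forall>j \<in> {1..m}. M i j \<longrightarrow>
        (let c = card {k. k < length R \<and> i \<in> fst (R ! k) \<and> j \<in> snd (R ! k)}
         in 1 \<le> c \<and> c \<le> s)"
  proof (intro ballI impI)
    fix i j assume ij: "i \<in> {1..n}" "j \<in> {1..m}" "M i j"
    then have "(i,j) \<in> set L" using setL by auto
    then obtain k where k: "k < length L" "L ! k = (i,j)" by (meson in_set_conv_nth)
    have "{k. k < length R \<and> i \<in> fst (R ! k) \<and> j \<in> snd (R ! k)} = {k}"
    proof -
      have "{k. k < length R \<and> i \<in> fst (R ! k) \<and> j \<in> snd (R ! k)} = {k'. k' < length L \<and> L ! k' = (i,j)}"
        unfolding R_def by (auto simp: prod_eq_iff)
      also have "\<dots> = {k}"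
      proof (intro equalityI subsetI)
        fix x assume "x \<in> {k'. k' < length L \<and> L ! k' = (i,j)}"
        then have "x < length L" "L ! x = L ! k" using k by auto
        then show "x \<in> {k}" using k(1) dL nth_eq_iff_index_eq by fastforce
      qed (use k in auto)
      finally show ?thesis .
    qed
    then show "let c = card {k. k < length R \<and> i \<in> fst (R ! k) \<and> j \<in> snd (R ! k)} in 1 \<le> c \<and> c \<le> s"
      using assms by simp
  qed
  have "is_s_cover s n m M R"
    unfolding is_s_cover_def using part1 part2 by blast
  then show ?thesis by blast
qed

theorem lemma4:
  fixes s d n m :: nat and M :: "nat \<Rightarrow> nat \<Rightarrow> bool"
  assumes "s \<ge> 1"
    and "br s n m M \<le> d"
  shows "num_rows n m M * num_cols n m M \<le> binom_le d s * 2 ^ d"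
proof -
  have "\<exists>d R. length R = d \<and> is_s_cover s n m M R" using cover_exists[OF assms(1)] by blast
  then have "\<exists>R. length R = br s n m M \<and> is_s_cover s n m M R"
    unfolding br_def by (rule LeastI_ex)
  then obtain R where R0: "length R = br s n m M" "is_s_cover s n m M R" by blast
  have R: "length R \<le> d" "is_s_cover s n m M R" using R0 assms(2) by simp_all
  define fa where "fa i = {k. k < length R \<and> i \<in> fst (R ! k)}" for i
  define fb where "fb j = {k. k < length R \<and> j \<in> snd (R ! k)}" for j
  define A where "A = fa ` {1..n}"
  define B where "B = fb ` {1..m}"
  have rect: "M i j" if "k < length R" "i \<in> fst (R ! k)" "j \<in> snd (R ! k)" for i j k
    using R(2) that unfolding is_s_cover_def by blast
  have cov: "1 \<le> card (fa i \<inter> fb j) \<and> card (fa i \<inter> fb j) \<le> s"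
    if "i \<in> {1..n}" "j \<in> {1..m}" "M i j" for i j
  proof -
    have "fa i \<inter> fb j = {k. k < length R \<and> i \<in> fst (R ! k) \<and> j \<in> snd (R ! k)}"
      unfolding fa_def fb_def by auto
    then show ?thesis using R(2) that unfolding is_s_cover_def Let_def by auto
  qed
  have Mchar: "M i j \<longleftrightarrow> fa i \<inter> fb j \<noteq> {}" if "i \<in> {1..n}" "j \<in> {1..m}" for i j
  proof
    assume "M i j" then show "fa i \<inter> fb j \<noteq> {}" using cov[OF that] by auto
  next
    assume "fa i \<inter> fb j \<noteq> {}" then show "M i j" unfolding fa_def fb_def using rect by auto
  qed
  have sA: "A \<subseteq> Pow {..<d}" unfolding A_def fa_def using R(1) by auto
  have sB: "B \<subseteq> Pow {..<d}" unfolding B_def fb_def using R(1) by auto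
  have iAB: "\<forall>X\<in>A. \<forall>Y\<in>B. card (X \<inter> Y) \<le> s"
  proof (intro ballI)
    fix X Y assume "X \<in> A" "Y \<in> B"
    then obtain i j where ij: "i \<in> {1..n}" "j \<in> {1..m}" "X = fa i" "Y = fb j"
      unfolding A_def B_def by auto
    show "card (X \<inter> Y) \<le> s"
    proof (cases "M i j")
      case True then show ?thesis using cov ij by auto
    next
      case False then have "X \<inter> Y = {}" using Mchar ij by auto
      then show ?thesis by simp
    qed
  qed
  define g where "g X = restrict (\<lambda>j. X \<inter> fb j \<noteq> {}) {1..m}" for X
  define h where "h Y = restrict (\<lambda>i. fa i \<inter> Y \<noteq> {}) {1..n}" for Y
  have rows: "(\<lambda>i. restrict (M i) {1..m}) ` {1..n} = g ` A"
  proof -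
    have "(\<lambda>i. restrict (M i) {1..m}) ` {1..n} = (\<lambda>i. g (fa i)) ` {1..n}"
      by (rule image_cong) (auto simp: g_def restrict_def Mchar intro!: ext)
    then show ?thesis unfolding A_def by (simp add: image_image)
  qed
  have cols: "(\<lambda>j. restrict (\<lambda>i. M i j) {1..n}) ` {1..m} = h ` B"
  proof -
    have "(\<lambda>j. restrict (\<lambda>i. M i j) {1..n}) ` {1..m} = (\<lambda>j. h (fb j)) ` {1..m}"
      by (rule image_cong) (auto simp: h_def restrict_def Mchar intro!: ext)
    then show ?thesis unfolding B_def by (simp add: image_image)
  qed
  have "num_rows n m M \<le> card A" unfolding num_rows_def rows
    by (rule card_image_le) (simp add: A_def)
  moreover have "num_cols n m M \<le> card B" unfolding num_cols_def cols
    by (rule card_image_le) (simp add: B_def)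
  ultimately have "num_rows n m M * num_cols n m M \<le> card A * card B"
    by (simp add: mult_le_mono)
  also have "\<dots> \<le> binom_le d s * 2 ^ d" by (rule fam[OF sA sB iAB])
  finally show ?thesis .
qed

end
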